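(* Let $n \ge 1$ and $1 \le m \le n$ be integers, and put $s_k = 8(n-k)$ and $M_k = 2^{k-1}(8n+16) - 16$ for $k \ge 1$. Consider Boolean variables $x_{(k,i)} \in \{0,1\}$ for $k \in \{1,\dots,m\}$ and $i \in \{1,2,3,4,5,6,A,B\}$ ($8m$ variables), and write an assignment as a bit string listing the variables in the order $(m,1),\dots,(m,6),(m,A),(m,B),(m-1,1),\dots,(m-1,B),\dots,(1,1),\dots,(1,B)$. For each $k$ define (writing $x_i$ for $x_{(k,i)}$) $$\begin{aligned} g_k(x) ={}& -(2M_k+13)x_1 - (M_k+5)x_2 - (M_k+3)x_3 - (M_k+s_k+7)x_4 - x_5 - (M_k+1)x_6 - (s_k+5)x_A - (s_k+3)x_B \\ &+ (M_k+6)x_1x_2 + (M_k+4)x_2x_3 + (M_k+2)x_3x_6 + (M_k+6)x_1x_4 + (M_k+4)x_4x_5 - (M_k+2)x_5x_6 \\ &+ (s_k+4)x_Ax_B - 2x_1x_B + (s_k+4)x_2x_B + (s_k+2)x_4x_A + (s_k+2)x_4x_B \\ &- (s_k+4)x_2x_Ax_B - (s_k+2)x_4x_Ax_B, \end{aligned}$$ and for $P \in \{0,1\}$ define the fitness function $$f^{P}(x) = \sum_{k=1}^{m} g_k(x) + \sum_{k=2}^{m} M_k\, x_{(k,6)}x_{(k-1,1)} + \sum_{k=1}^{m-1} s_k\, x_{(k,B)}x_{(k+1,A)} + 8n\, x_{(1,6)}x_{(1,A)} + P\,(2M_m+16)\,x_{(m,1)}.$$ Let $a = 0^{8m}$ and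 $b = 111110\,01\,0^{8(m-1)}$. Then: (1) in the fitness landscape of $f^{1}$ there is exactly one ascent starting from $a$, and it ends at the local peak $b$; (2) in the fitness landscape of $f^{0}$ there is exactly one ascent starting from $b$, and it ends at the local peak $a$. Both ascents have length $T_m = 10(2^m - 1)$.
   Context: Two assignments in $\{0,1\}^{8m}$ are adjacent if they differ in exactly one variable. For a fitness function $f$, an assignment $x^*$ is a local peak if $f(y) \le f(x^* )$ for every assignment $y$ adjacent to $x^*$. An ascent from $x^0$ is a sequence $x^0, x^1, \dots, x^T$ of assignments such that $x^{t}$ and $x^{t+1}$ are adjacent and $f(x^{t+1}) > f(x^t)$ for each $t$, and $x^T$ is a local peak; its length is $T$. The fitness landscape of $f$ is $f$ together with this adjacency structure. *)

theory Defs
  imports Main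
begin

(* Assignments in {0,1}^N are bool lists of length N (True = 1). *)

definition adjacent :: "bool list \<Rightarrow> bool list \<Rightarrow> bool" where
  "adjacent x y \<longleftrightarrow> length x = length y \<and>
     card {i. i < length x \<and> x ! i \<noteq> y ! i} = 1"

definition local_peak :: "nat \<Rightarrow> (bool list \<Rightarrow> int) \<Rightarrow> bool list \<Rightarrow> bool" where
  "local_peak N f x \<longleftrightarrow> length x = N \<and>
     (\<forall>y. length y = N \<longrightarrow> adjacent x y \<longrightarrow> f y \<le> f x)"

(* An ascent x^0,...,x^T is represented by the nonempty list [x^0,...,x^T];
   its length T is  length p - 1. *)
definition is_ascent :: "nat \<Rightarrow> (bool list \<Rightarrow> int) \<Rightarrow> bool list list \<Rightarrow> bool" where
  "is_ascent N f p \<longleftrightarrow> p \<noteq> [] \<and> (\<forall>x\<in>set p. length x = N) \<and>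
     (\<forall>t. Suc t < length p \<longrightarrow> adjacent (p ! t) (p ! Suc t) \<and> f (p ! Suc t) > f (p ! t)) \<and>
     local_peak N f (last p)"

definition s_par :: "nat \<Rightarrow> nat \<Rightarrow> int" where
  "s_par n k = 8 * (int n - int k)"

definition M_par :: "nat \<Rightarrow> nat \<Rightarrow> int" where
  "M_par n k = 2 ^ (k - 1) * (8 * int n + 16) - 16"

(* variable x_(k,i), i = 0..7 standing for 1,2,3,4,5,6,A,B; positions in the bit string
   are ordered (m,1),...,(m,B),(m-1,1),...,(1,B). *)
definition xv :: "nat \<Rightarrow> bool list \<Rightarrow> nat \<Rightarrow> nat \<Rightarrow> int" where
  "xv m x k i = (if x ! (8 * (m - k) + i) then 1 else 0)"

definition g_blk :: "nat \<Rightarrow> nat \<Rightarrow> bool list \<Rightarrow> nat \<Rightarrow> int" where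
  "g_blk n m x k =
    (let M = M_par n k; s = s_par n k;
         x1 = xv m x k 0; x2 = xv m x k 1; x3 = xv m x k 2; x4 = xv m x k 3;
         x5 = xv m x k 4; x6 = xv m x k 5; xA = xv m x k 6; xB = xv m x k 7
     in - (2*M + 13) * x1 - (M + 5) * x2 - (M + 3) * x3 - (M + s + 7) * x4 - x5
        - (M + 1) * x6 - (s + 5) * xA - (s + 3) * xB
        + (M + 6) * x1 * x2 + (M + 4) * x2 * x3 + (M + 2) * x3 * x6
        + (M + 6) * x1 * x4 + (M + 4) * x4 * x5 - (M + 2) * x5 * x6
        + (s + 4) * xA * xB - 2 * x1 * xB + (s + 4) * x2 * xB
        + (s + 2) * x4 * xA + (s + 2) * x4 * xB
        - (s + 4) * x2 * xA * xB - (s + 2) * x4 * xA * xB)"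

definition fitness :: "nat \<Rightarrow> nat \<Rightarrow> int \<Rightarrow> bool list \<Rightarrow> int" where
  "fitness n m P x =
     (\<Sum>k=1..m. g_blk n m x k)
     + (\<Sum>k=2..m. M_par n k * xv m x k 5 * xv m x (k - 1) 0)
     + (\<Sum>k=1..m-1. s_par n k * xv m x k 7 * xv m x (k + 1) 6)
     + 8 * int n * xv m x 1 5 * xv m x 1 6
     + P * (2 * M_par n m + 16) * xv m x m 0"

end

theory Submission
  imports Defs
begin
definition bt :: "bool list \<Rightarrow> nat \<Rightarrow> int" where "bt x i = (if x ! i then 1 else 0)"
definition Gloc :: "int \<Rightarrow> int \<Rightarrow> bool list \<Rightarrow> int \<Rightarrow> int \<Rightarrow> int" where
 "Gloc M s t P Q =
    (let x1 = bt t 0; x2 = bt t 1; x3 = bt t 2; x4 = bt t 3;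
         x5 = bt t 4; x6 = bt t 5; xA = bt t 6; xB = bt t 7
     in - (2*M + 13) * x1 - (M + 5) * x2 - (M + 3) * x3 - (M + s + 7) * x4 - x5
        - (M + 1) * x6 - (s + 5) * xA - (s + 3) * xB
        + (M + 6) * x1 * x2 + (M + 4) * x2 * x3 + (M + 2) * x3 * x6
        + (M + 6) * x1 * x4 + (M + 4) * x4 * x5 - (M + 2) * x5 * x6
        + (s + 4) * xA * xB - 2 * x1 * xB + (s + 4) * x2 * xB
        + (s + 2) * x4 * xA + (s + 2) * x4 * xB
        - (s + 4) * x2 * xA * xB - (s + 2) * x4 * xA * xB
        + P * (2 * M + 16) * x1 + Q * s * xB)"
definition TE :: "int \<Rightarrow> int \<Rightarrow> bool list \<Rightarrow> int \<Rightarrow> int \<Rightarrow> int \<Rightarrow> int \<Rightarrow> int" where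
 "TE M s t P Q d1 dB = Gloc M s t P Q + M * bt t 5 * d1 + (s + 8) * bt t 6 * dB"
definition TEx :: "int \<Rightarrow> int \<Rightarrow> int \<Rightarrow> int \<Rightarrow> (int \<times> int) option \<Rightarrow> bool list \<Rightarrow> int" where
 "TEx M s P Q dm t = (case dm of None \<Rightarrow> TE M s t P Q 0 (bt t 5) | Some d \<Rightarrow> TE M s t P Q (fst d) (snd d))"
definition flip :: "bool list \<Rightarrow> nat \<Rightarrow> bool list" where "flip t i = t[i := \<not> t ! i]"
definition peakc :: "(bool list \<Rightarrow> int) \<Rightarrow> bool list \<Rightarrow> bool" where
 "peakc E t \<longleftrightarrow> (\<forall>i<8. E (flip t i) \<le> E t)"
definition ustepT :: "(bool list \<Rightarrow> int) \<Rightarrow> bool list \<Rightarrow> bool list \<Rightarrow> bool" where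
 "ustepT E t u \<longleftrightarrow> E t < E u \<and> (\<exists>i<8. u = flip t i) \<and> (\<forall>i<8. flip t i \<noteq> u \<longrightarrow> E (flip t i) \<le> E t)"
fun tchain :: "(bool list \<Rightarrow> int) \<Rightarrow> bool list list \<Rightarrow> bool" where
 "tchain E [] = True" | "tchain E [t] = True" | "tchain E (t # u # r) = (ustepT E t u \<and> tchain E (u # r))"

lemma all8: "(\<forall>i<(8::nat). P i) \<longleftrightarrow> P 0 \<and> P 1 \<and> P 2 \<and> P 3 \<and> P 4 \<and> P 5 \<and> P 6 \<and> P 7"
  by (simp add: All_less_Suc eval_nat_numeral conj_ac)
lemma ex8: "(\<exists>i<(8::nat). P i) \<longleftrightarrow> P 0 \<or> P 1 \<or> P 2 \<or> P 3 \<or> P 4 \<or> P 5 \<or> P 6 \<or> P 7"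
  by (simp add: Ex_less_Suc eval_nat_numeral disj_ac)

lemmas ev = TEx_def TE_def Gloc_def bt_def flip_def peakc_def ustepT_def all8 ex8 Let_def

definition topB :: "bool list" where "topB = [True,True,True,True,True,False,False,True]"
definition preL :: "bool \<Rightarrow> bool list list" where
  "preL d = (if d then [[False,False,False,False,False,False,False,False], [True,False,False,False,False,False,False,False], [True,True,False,False,False,False,False,False], [True,True,True,False,False,False,False,False]] else [[True,True,True,True,True,False,False,True], [False,True,True,True,True,False,False,True], [False,True,True,False,True,False,False,True], [False,True,True,False,False,False,False,True]])"
definition c1 :: "bool \<Rightarrow> bool list" where
  "c1 d = (if d then [True,True,True,False,False,True,False,False] else [False,True,True,False,False,True,False,True])"
definition midL :: "bool \<Rightarrow> bool list list" where
  "midL d = (if d then [[True,True,True,False,False,True,True,False], [True,True,True,True,False,True,True,False], [True,True,True,True,True,True,True,False]] else [[False,True,True,False,False,True,True,True], [False,False,True,False,False,True,True,True], [False,False,False,False,False,True,True,True]])"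
definition c2 :: "bool \<Rightarrow> bool list" where
  "c2 d = (if d then [True,True,True,True,True,False,True,False] else [False,False,False,False,False,False,True,True])"
definition postL :: "bool \<Rightarrow> bool list list" where
  "postL d = (if d then [[True,True,True,True,True,False,False,False], [True,True,True,True,True,False,False,True]] else [[False,False,False,False,False,False,False,True], [False,False,False,False,False,False,False,False]])"

definition valid :: "bool \<Rightarrow> int \<Rightarrow> int \<Rightarrow> bool" where
  "valid d P Q \<longleftrightarrow> (d \<and> P = 1 \<and> Q = 0) \<or> (\<not> d \<and> P = 0 \<and> (Q = 0 \<or> Q = 1))"

lemmas dat = preL_def c1_def midL_def c2_def postL_def

lemma chk_z:
  assumes "s \<ge> 0" "M \<ge> s + 8" "valid d P Q" "dm = None \<or> dm = Some (0,0)"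
  shows "tchain (TEx M s P Q dm) (preL d @ [c1 d]) \<and> tchain (TEx M s P Q dm) (c2 d # postL d)
    \<and> peakc (TEx M s P Q dm) (last (postL d))"
  using assms(3,4) unfolding valid_def
  by (elim disjE conjE; simp add: dat ev; use assms(1,2) in linarith)

lemma chk_b:
  assumes "s \<ge> 0" "M \<ge> s + 8" "valid d P Q" "dm = None \<or> dm = Some (1,1)"
  shows "tchain (TEx M s P Q dm) (c1 d # midL d @ [c2 d])"
  using assms(3,4) unfolding valid_def
  by (elim disjE conjE; simp add: dat ev; use assms(1,2) in linarith)

lemma chk_s:
  assumes "s \<ge> 0" "M \<ge> s + 8" "valid d P Q" "d1 = 0 \<or> d1 = 1"
  shows "peakc (TEx M s P Q (Some (d1, 0))) (c1 d) \<and> peakc (TEx M s P Q (Some (d1, 1))) (c2 d)"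
  using assms(3,4) unfolding valid_def
  by (elim disjE conjE; simp add: dat ev; use assms(1,2) in linarith)

lemma adjacent_iff:
  "adjacent x y \<longleftrightarrow> length y = length x \<and> (\<exists>j<length x. y = flip x j)"
proof
  assume a: "adjacent x y"
  then have len: "length x = length y" and c: "card {i. i < length x \<and> x ! i \<noteq> y ! i} = 1"
    by (auto simp: adjacent_def)
  from c obtain j where j: "{i. i < length x \<and> x ! i \<noteq> y ! i} = {j}"
    by (auto simp: card_1_singleton_iff)
  then have jl: "j < length x" and jd: "x ! j \<noteq> y ! j" by auto
  have "y = flip x j"
  proof (rule nth_equalityI)
    show "length y = length (flip x j)" using len by (simp add: flip_def)
    fix i assume "i < length y"
    then show "y ! i = flip x j ! i"
      using j jd len by (cases "i = j") (auto simp: flip_def nth_list_update)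
  qed
  then show "length y = length x \<and> (\<exists>j<length x. y = flip x j)" using len jl by auto
next
  assume "length y = length x \<and> (\<exists>j<length x. y = flip x j)"
  then obtain j where j: "j < length x" "y = flip x j" and len: "length y = length x" by auto
  have "{i. i < length x \<and> x ! i \<noteq> y ! i} = {j}"
    using j by (auto simp: flip_def nth_list_update)
  then show "adjacent x y" using len by (simp add: adjacent_def)
qed

lemma length_flip[simp]: "length (flip x j) = length x" by (simp add: flip_def)

lemma adjacent_flip: "j < length x \<Longrightarrow> adjacent x (flip x j)"
  by (auto simp: adjacent_iff)

lemma flip_append:
  "length t = 8 \<Longrightarrow> flip (t @ s) j = (if j < 8 then flip t j @ s else t @ flip s (j - 8))"
  by (simp add: flip_def list_update_append nth_append)

lemma local_peak0: "local_peak 0 f []"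
  by (auto simp: local_peak_def adjacent_iff)

primrec Fr :: "nat \<Rightarrow> nat \<Rightarrow> int \<Rightarrow> int \<Rightarrow> bool list \<Rightarrow> int" where
  "Fr n 0 P Q x = s_par n 0 * P * Q"
| "Fr n (Suc k) P Q x = Gloc (M_par n (Suc k)) (s_par n (Suc k)) x P Q
      + Fr n k (bt x 5) (bt x 6) (drop 8 x)"

definition TEk :: "nat \<Rightarrow> nat \<Rightarrow> bool list \<Rightarrow> int \<Rightarrow> int \<Rightarrow> bool list \<Rightarrow> int" where
  "TEk n k t P Q x = TEx (M_par n (Suc k)) (s_par n (Suc k)) P Q
      (if k = 0 then None else Some (bt x 0, bt x 7)) t"

lemma Gloc_app: "length t = 8 \<Longrightarrow> Gloc M s (t @ u) P Q = Gloc M s t P Q"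
  by (simp add: Gloc_def bt_def nth_append Let_def)

lemma bt_app: "length t = 8 \<Longrightarrow> i < 8 \<Longrightarrow> bt (t @ u) i = bt t i"
  by (simp add: bt_def nth_append)

lemma Gloc_PQ: "Gloc M s t P Q = Gloc M s t 0 0 + P * (2 * M + 16) * bt t 0 + Q * s * bt t 7"
  by (simp add: Gloc_def Let_def algebra_simps)

lemma M_Suc: "2 * M_par n (Suc k) + 16 = M_par n (Suc (Suc k))"
  by (simp add: M_par_def algebra_simps)

lemma s_Suc: "s_par n k = s_par n (Suc k) + 8"
  by (simp add: s_par_def algebra_simps)

lemma Fr_app:
  "length t = 8 \<Longrightarrow> Fr n (Suc k) P Q (t @ u) =
     Gloc (M_par n (Suc k)) (s_par n (Suc k)) t P Q + Fr n k (bt t 5) (bt t 6) u"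
  by (simp add: Gloc_app bt_app)

lemma Fr_split:
  assumes "length t = 8"
  shows "Fr n (Suc k) P Q (t @ u) = TEk n k t P Q u + Fr n k 0 0 u"
proof (cases k)
  case 0
  then show ?thesis using assms
    by (simp add: Gloc_app bt_app TEk_def TEx_def TE_def s_Suc[of n 0] algebra_simps)
next
  case (Suc j)
  have h: "Fr n k (bt t 5) (bt t 6) u = Fr n k 0 0 u + bt t 5 * M_par n (Suc k) * bt u 0
          + bt t 6 * (s_par n (Suc k) + 8) * bt u 7"
    using Suc by (simp add: Gloc_PQ[of _ _ u "bt t 5" "bt t 6"] M_Suc[symmetric] s_Suc[of n "Suc j"] algebra_simps)
  show ?thesis unfolding Fr_app[OF assms] h using Suc
    by (simp add: TEk_def TEx_def TE_def algebra_simps)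
qed

lemma Fr_Q:
  "Fr n (Suc k) P Q x = Fr n (Suc k) P 0 x + Q * s_par n (Suc k) * bt x 7"
  by (simp add: Gloc_PQ[of _ _ x P Q] Gloc_PQ[of _ _ x P 0])

declare Fr.simps(2) [simp del]

definition uniq_step :: "(bool list \<Rightarrow> int) \<Rightarrow> nat \<Rightarrow> bool list \<Rightarrow> bool list \<Rightarrow> bool" where
  "uniq_step f N x y \<longleftrightarrow> adjacent x y \<and> f x < f y \<and>
     (\<forall>z. length z = N \<longrightarrow> adjacent x z \<longrightarrow> f x < f z \<longrightarrow> z = y)"

fun chain :: "(bool list \<Rightarrow> int) \<Rightarrow> nat \<Rightarrow> bool list list \<Rightarrow> bool" where
  "chain f N [] = True"
| "chain f N [x] = True"
| "chain f N (x # y # zs) = (uniq_step f N x y \<and> chain f N (y # zs))"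

lemma chain_Cons: "chain f N (x # ys) \<longleftrightarrow> (ys = [] \<or> (uniq_step f N x (hd ys) \<and> chain f N ys))"
  by (cases ys) auto

lemma glue2: "chain f N (xs @ [a]) \<Longrightarrow> chain f N (a # ys) \<Longrightarrow> chain f N (xs @ a # ys)"
proof (induction xs)
  case Nil then show ?case by simp
next
  case (Cons x xs)
  then show ?case by (cases xs) (auto simp: chain_Cons)
qed

lemma glue1: "chain f N xs \<Longrightarrow> xs \<noteq> [] \<Longrightarrow> chain f N (last xs # ys) \<Longrightarrow> chain f N (xs @ ys)"
proof -
  assume a: "chain f N xs" "xs \<noteq> []" "chain f N (last xs # ys)"
  then have "chain f N (butlast xs @ [last xs])" by simp
  from glue2[OF this a(3)] have "chain f N ((butlast xs @ [last xs]) @ ys)" by simp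
  then show ?thesis using a(2) by simp
qed

lemma chain_nth: "chain f N xs \<Longrightarrow> Suc t < length xs \<Longrightarrow> uniq_step f N (xs ! t) (xs ! Suc t)"
proof (induction xs arbitrary: t rule: induct_list012)
  case (3 x y zs)
  then show ?case by (cases t) auto
qed auto


lemma ustep_lower:
  assumes t: "length t = 8" and x: "length x = 8*k"
    and u: "uniq_step (Fr n k (bt t 5) (bt t 6)) (8*k) x y"
    and pk: "peakc (\<lambda>v. TEk n k v P Q x) t"
  shows "uniq_step (Fr n (Suc k) P Q) (8 * Suc k) (t @ x) (t @ y)"
proof -
  from u obtain j where j: "j < length x" "y = flip x j" by (auto simp: uniq_step_def adjacent_iff)
  have ty: "t @ y = flip (t @ x) (8 + j)" using t j by (simp add: flip_append)
  have adj: "adjacent (t @ x) (t @ y)" using ty j t by (simp add: adjacent_flip)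
  have imp: "Fr n (Suc k) P Q (t @ x) < Fr n (Suc k) P Q (t @ y)"
    using u t by (simp add: Fr_app uniq_step_def)
  have "z = t @ y" if zl: "length z = 8 * Suc k" and za: "adjacent (t @ x) z"
    and zi: "Fr n (Suc k) P Q (t @ x) < Fr n (Suc k) P Q z" for z
  proof -
    from za obtain i where i: "i < length (t @ x)" "z = flip (t @ x) i" by (auto simp: adjacent_iff)
    show ?thesis
    proof (cases "i < 8")
      case True
      then have zz: "z = flip t i @ x" using i t by (simp add: flip_append)
      have "TEk n k (flip t i) P Q x \<le> TEk n k t P Q x" using pk True by (simp add: peakc_def)
      then show ?thesis using zi zz t by (simp add: Fr_split)
    next
      case False
      then have zz: "z = t @ flip x (i - 8)" using i t by (simp add: flip_append)
      have il: "i - 8 < length x" using i t False by simp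
      have "Fr n k (bt t 5) (bt t 6) x < Fr n k (bt t 5) (bt t 6) (flip x (i - 8))"
        using zi zz t by (simp add: Fr_app)
      moreover have "adjacent x (flip x (i - 8))" using il by (rule adjacent_flip)
      moreover have "length (flip x (i - 8)) = 8*k" using x by simp
      ultimately have "flip x (i - 8) = y" using u unfolding uniq_step_def by blast
      then show ?thesis using zz by simp
    qed
  qed
  then show ?thesis using adj imp by (auto simp: uniq_step_def)
qed

lemma ustep_top:
  assumes t: "length t = 8" and x: "length x = 8*k"
    and st: "ustepT (\<lambda>v. TEk n k v P Q x) t u"
    and pk: "local_peak (8*k) (Fr n k (bt t 5) (bt t 6)) x"
  shows "uniq_step (Fr n (Suc k) P Q) (8 * Suc k) (t @ x) (u @ x)"
proof -
  from st obtain j where j: "j < 8" "u = flip t j" by (auto simp: ustepT_def)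
  have ul: "length u = 8" using j t by simp
  have ux: "u @ x = flip (t @ x) j" using t j by (simp add: flip_append)
  have adj: "adjacent (t @ x) (u @ x)" using ux j t by (simp add: adjacent_flip)
  have imp: "Fr n (Suc k) P Q (t @ x) < Fr n (Suc k) P Q (u @ x)"
    using st t ul by (simp add: Fr_split ustepT_def)
  have "z = u @ x" if zl: "length z = 8 * Suc k" and za: "adjacent (t @ x) z"
    and zi: "Fr n (Suc k) P Q (t @ x) < Fr n (Suc k) P Q z" for z
  proof -
    from za obtain i where i: "i < length (t @ x)" "z = flip (t @ x) i" by (auto simp: adjacent_iff)
    show ?thesis
    proof (cases "i < 8")
      case True
      then have zz: "z = flip t i @ x" using i t by (simp add: flip_append)
      show ?thesis
      proof (rule ccontr)
        assume "z \<noteq> u @ x"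
        then have "flip t i \<noteq> u" using zz by auto
        then have "TEk n k (flip t i) P Q x \<le> TEk n k t P Q x" using st True by (simp add: ustepT_def)
        then show False using zi zz t by (simp add: Fr_split)
      qed
    next
      case False
      then have zz: "z = t @ flip x (i - 8)" using i t by (simp add: flip_append)
      have il: "i - 8 < length x" using i t False by simp
      have "Fr n k (bt t 5) (bt t 6) (flip x (i - 8)) \<le> Fr n k (bt t 5) (bt t 6) x"
        using pk il x by (simp add: local_peak_def adjacent_flip)
      then show ?thesis using zi zz t by (simp add: Fr_app)
    qed
  qed
  then show ?thesis using adj imp by (auto simp: uniq_step_def)
qed

lemma lift_lower:
  assumes t: "length t = 8"
  shows "chain (Fr n k (bt t 5) (bt t 6)) (8*k) xs \<Longrightarrow> \<forall>x\<in>set xs. length x = 8*k \<Longrightarrow>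
    \<forall>x\<in>set (butlast xs). peakc (\<lambda>v. TEk n k v P Q x) t \<Longrightarrow>
    chain (Fr n (Suc k) P Q) (8 * Suc k) (map ((@) t) xs)"
proof (induction xs rule: induct_list012)
  case (3 x y zs)
  have "uniq_step (Fr n (Suc k) P Q) (8 * Suc k) (t @ x) (t @ y)"
    using 3 by (intro ustep_lower[OF t]) auto
  moreover have "chain (Fr n (Suc k) P Q) (8 * Suc k) (map ((@) t) (y # zs))"
    using 3 by (intro "3.IH"(2)) auto
  ultimately show ?case by simp
qed auto

lemma lift_top:
  assumes x: "length x = 8*k"
  shows "\<forall>t\<in>set ts. length t = 8 \<Longrightarrow> tchain (\<lambda>v. TEk n k v P Q x) ts \<Longrightarrow>
    \<forall>t\<in>set (butlast ts). local_peak (8*k) (Fr n k (bt t 5) (bt t 6)) x \<Longrightarrow>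
    chain (Fr n (Suc k) P Q) (8 * Suc k) (map (\<lambda>t. t @ x) ts)"
proof (induction ts rule: induct_list012)
  case (3 t u r)
  have "uniq_step (Fr n (Suc k) P Q) (8 * Suc k) (t @ x) (u @ x)"
    using 3 by (intro ustep_top[OF _ x]) auto
  moreover have "chain (Fr n (Suc k) P Q) (8 * Suc k) (map (\<lambda>t. t @ x) (u # r))"
    using 3 by (intro "3.IH"(2)) auto
  ultimately show ?case by simp
qed auto

lemma peak_top:
  assumes t: "length t = 8" and x: "length x = 8*k" and pc: "peakc (\<lambda>v. TEk n k v P Q x) t"
    and pk: "local_peak (8*k) (Fr n k (bt t 5) (bt t 6)) x"
  shows "local_peak (8 * Suc k) (Fr n (Suc k) P Q) (t @ x)"
  unfolding local_peak_def
proof (intro conjI allI impI)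
  show "length (t @ x) = 8 * Suc k" using t x by simp
  fix z assume zl: "length z = 8 * Suc k" and za: "adjacent (t @ x) z"
  from za obtain i where i: "i < length (t @ x)" "z = flip (t @ x) i" by (auto simp: adjacent_iff)
  show "Fr n (Suc k) P Q z \<le> Fr n (Suc k) P Q (t @ x)"
  proof (cases "i < 8")
    case True
    then have zz: "z = flip t i @ x" using i t by (simp add: flip_append)
    have "TEk n k (flip t i) P Q x \<le> TEk n k t P Q x" using pc True by (simp add: peakc_def)
    then show ?thesis using zz t by (simp add: Fr_split)
  next
    case False
    then have zz: "z = t @ flip x (i - 8)" using i t by (simp add: flip_append)
    have il: "i - 8 < length x" using i t False by simp
    have "Fr n k (bt t 5) (bt t 6) (flip x (i - 8)) \<le> Fr n k (bt t 5) (bt t 6) x"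
      using pk il x by (simp add: local_peak_def adjacent_flip)
    then show ?thesis using zz t by (simp add: Fr_app)
  qed
qed

lemma ascent_exists:
  assumes ch: "chain f N xs" and ne: "xs \<noteq> []" and len: "\<forall>x\<in>set xs. length x = N"
    and pk: "local_peak N f (last xs)"
  shows "is_ascent N f xs"
  unfolding is_ascent_def using ch ne len pk by (auto dest: chain_nth simp: uniq_step_def)

lemma ascent_unique:
  assumes ch: "chain f N xs" and ne: "xs \<noteq> []" and len: "\<forall>x\<in>set xs. length x = N"
    and pk: "local_peak N f (last xs)"
    and ap: "is_ascent N f p" and hp: "hd p = hd xs"
  shows "p = xs"
proof -
  from ap have pne: "p \<noteq> []" and plen: "\<forall>x\<in>set p. length x = N"
    and pst: "\<forall>t. Suc t < length p \<longrightarrow> adjacent (p!t) (p!Suc t) \<and> f (p!t) < f (p!Suc t)"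
    and ppk: "local_peak N f (last p)" by (auto simp: is_ascent_def)
  have A: "t < length xs \<and> p!t = xs!t" if "t < length p" for t
    using that
  proof (induction t)
    case 0 then show ?case using pne ne hp by (simp add: hd_conv_nth)
  next
    case (Suc t)
    then have IH: "t < length xs" "p!t = xs!t" by auto
    have ad: "adjacent (xs!t) (p!Suc t)" and im: "f (xs!t) < f (p!Suc t)"
      using pst Suc.prems IH by auto
    have pl: "length (p!Suc t) = N" using plen Suc.prems by auto
    show ?case
    proof (cases "Suc t < length xs")
      case True
      then have "uniq_step f N (xs!t) (xs!Suc t)" by (rule chain_nth[OF ch])
      then show ?thesis using ad im pl True Suc.prems by (auto simp: uniq_step_def)
    next
      case False
      then have "t = length xs - 1" using IH by simp
      then have "xs!t = last xs" using ne by (simp add: last_conv_nth)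
      then show ?thesis using pk ad im pl by (auto simp: local_peak_def)
    qed
  qed
  have "length p - 1 < length xs" using A[of "length p - 1"] pne by simp
  then have le: "length p \<le> length xs" by simp
  moreover have "\<not> length p < length xs"
  proof
    assume lt: "length p < length xs"
    let ?t = "length p - 1"
    have "last p = xs!?t" using A[of ?t] pne by (simp add: last_conv_nth)
    moreover have "uniq_step f N (xs!?t) (xs!Suc ?t)" using lt pne by (intro chain_nth[OF ch]) auto
    moreover have "length (xs!Suc ?t) = N" using len lt pne by simp
    ultimately show False using ppk unfolding uniq_step_def local_peak_def by force
  qed
  ultimately have "length p = length xs" by simp
  then show "p = xs" using A by (auto intro: nth_equalityI)
qed

lemma is_ascent_cong:
  assumes e: "\<And>x. length x = N \<Longrightarrow> f x = g x"
  shows "is_ascent N f p = is_ascent N g p"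
proof -
  have lp: "local_peak N f x = local_peak N g x" for x using e by (auto simp: local_peak_def)
  show ?thesis
  proof (cases "\<forall>x\<in>set p. length x = N")
    case True
    then have "\<forall>t. Suc t < length p \<longrightarrow> f (p!t) = g (p!t) \<and> f (p!Suc t) = g (p!Suc t)"
      using e by auto
    then show ?thesis unfolding is_ascent_def lp using True by auto
  next
    case False
    then show ?thesis unfolding is_ascent_def by blast
  qed
qed


definition Sfit :: "nat \<Rightarrow> nat \<Rightarrow> bool list \<Rightarrow> int" where
  "Sfit n m x = (\<Sum>k=1..m. g_blk n m x k)
     + (\<Sum>k=2..m. M_par n k * xv m x k 5 * xv m x (k - 1) 0)
     + (\<Sum>k=1..m-1. s_par n k * xv m x k 7 * xv m x (k + 1) 6)
     + 8 * int n * xv m x 1 5 * xv m x 1 6"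

lemma xv_drop: "8 \<le> length x \<Longrightarrow> k \<le> m \<Longrightarrow> xv m (drop 8 x) k i = xv (Suc m) x k i"
  by (simp add: xv_def Suc_diff_le algebra_simps)

lemma gblk_drop: assumes "8 \<le> length x" "k \<le> m" shows "g_blk n m (drop 8 x) k = g_blk n (Suc m) x k"
  unfolding g_blk_def xv_drop[OF assms] ..

lemma xv_top: "bt x i = xv (Suc m) x (Suc m) i"
  by (simp add: xv_def bt_def)

lemma xv_top': "xv (Suc m) x (Suc m) i = bt x i"
  by (simp add: xv_def bt_def)

lemma gblk_top: "Gloc (M_par n (Suc m)) (s_par n (Suc m)) x P Q =
   g_blk n (Suc m) x (Suc m) + P * (2 * M_par n (Suc m) + 16) * xv (Suc m) x (Suc m) 0
   + Q * s_par n (Suc m) * xv (Suc m) x (Suc m) 7"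
  unfolding g_blk_def Gloc_def xv_top' by (simp add: Let_def algebra_simps)

lemma Sfit_Suc:
  assumes l: "8 \<le> length x"
  shows "Sfit n (Suc (Suc m)) x = g_blk n (Suc (Suc m)) x (Suc (Suc m)) + Sfit n (Suc m) (drop 8 x)
    + M_par n (Suc (Suc m)) * xv (Suc (Suc m)) x (Suc (Suc m)) 5 * xv (Suc (Suc m)) x (Suc m) 0
    + s_par n (Suc m) * xv (Suc (Suc m)) x (Suc m) 7 * xv (Suc (Suc m)) x (Suc (Suc m)) 6"
proof -
  let ?m2 = "Suc (Suc m)"
  have c1: "(\<Sum>k=1..Suc m. g_blk n (Suc m) (drop 8 x) k) = (\<Sum>k=1..Suc m. g_blk n ?m2 x k)"
    using l by (intro sum.cong) (auto simp: gblk_drop)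
  have c2: "(\<Sum>k=2..Suc m. M_par n k * xv (Suc m) (drop 8 x) k 5 * xv (Suc m) (drop 8 x) (k - 1) 0)
      = (\<Sum>k=2..Suc m. M_par n k * xv ?m2 x k 5 * xv ?m2 x (k - 1) 0)"
    using l by (intro sum.cong) (auto simp: xv_drop)
  have c3: "(\<Sum>k=1..Suc m - 1. s_par n k * xv (Suc m) (drop 8 x) k 7 * xv (Suc m) (drop 8 x) (k + 1) 6)
      = (\<Sum>k=1..m. s_par n k * xv ?m2 x k 7 * xv ?m2 x (k + 1) 6)"
    using l by (intro sum.cong) (auto simp: xv_drop)
  have c4: "xv (Suc m) (drop 8 x) 1 5 = xv ?m2 x 1 5" "xv (Suc m) (drop 8 x) 1 6 = xv ?m2 x 1 6"
    using l by (auto simp: xv_drop)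
  show ?thesis unfolding Sfit_def c1 c2 c3 c4 by (simp add: algebra_simps)
qed

lemma Fr_Sfit:
  "length x = 8 * Suc m \<Longrightarrow> Fr n (Suc m) P Q x = Sfit n (Suc m) x
     + P * (2 * M_par n (Suc m) + 16) * xv (Suc m) x (Suc m) 0 + Q * s_par n (Suc m) * xv (Suc m) x (Suc m) 7"
proof (induction m arbitrary: x P Q)
  case 0
  show ?case unfolding Fr.simps(2) gblk_top
    by (simp add: Sfit_def xv_def bt_def s_par_def algebra_simps)
next
  case (Suc m)
  have l8: "8 \<le> length x" using Suc.prems by simp
  have ld: "length (drop 8 x) = 8 * Suc m" using Suc.prems by simp
  show ?case unfolding Fr.simps(2)[of n "Suc m"] Suc.IH[OF ld] gblk_top
    by (simp add: Sfit_Suc[OF l8] xv_top[of x _ "Suc m"] xv_drop[OF l8] M_Suc[symmetric] algebra_simps)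
qed

lemma fitness_Fr: "length x = 8 * m \<Longrightarrow> 1 \<le> m \<Longrightarrow> fitness n m P x = Fr n m P 0 x"
proof -
  assume l: "length x = 8 * m" and m: "1 \<le> m"
  then obtain j where j: "m = Suc j" by (cases m) auto
  show ?thesis using l unfolding j by (simp add: Fr_Sfit fitness_def Sfit_def)
qed


definition zeros :: "nat \<Rightarrow> bool list" where "zeros k = replicate (8 * k) False"

fun bk :: "nat \<Rightarrow> bool list" where
  "bk 0 = []"
| "bk (Suc k) = topB @ zeros k"

fun path :: "bool \<Rightarrow> nat \<Rightarrow> bool list list" where
  "path d 0 = [[]]"
| "path d (Suc k) = map (\<lambda>t. t @ zeros k) (preL d) @ map ((@) (c1 d)) (path True k)
     @ map (\<lambda>t. t @ bk k) (midL d) @ map ((@) (c2 d)) (path False k)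
     @ map (\<lambda>t. t @ zeros k) (postL d)"

lemma len_zeros[simp]: "length (zeros k) = 8 * k" by (simp add: zeros_def)
lemma len_bk[simp]: "length (bk k) = 8 * k" by (cases k) (simp_all add: topB_def)
lemma rep8: "replicate 8 False = [False,False,False,False,False,False,False,False]"
  by (simp add: numeral_eq_Suc)

lemma zeros_Suc: "zeros (Suc k) = [False,False,False,False,False,False,False,False] @ zeros k"
  unfolding rep8[symmetric] by (simp add: zeros_def replicate_add[symmetric])

lemma tops_lenL: "length (preL d) = 4" "length (midL d) = 3" "length (postL d) = 2"
  by (simp_all add: dat)

lemma tops_len: "\<forall>t\<in>set (preL d). length t = 8" "length (c1 d) = 8" "\<forall>t\<in>set (midL d). length t = 8"
  "length (c2 d) = 8" "\<forall>t\<in>set (postL d). length t = 8"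
  by (simp_all add: dat)

lemma tops_ne[simp]: "preL d \<noteq> []" "midL d \<noteq> []" "postL d \<noteq> []"
  by (simp_all add: dat)

lemma tops_bt: "\<forall>t\<in>set (preL d). bt t 5 = 0" "bt (c1 d) 5 = 1" "bt (c1 d) 6 = 0"
  "\<forall>t\<in>set (midL d). bt t 5 = 1" "bt (c2 d) 5 = 0" "bt (c2 d) 6 = 1"
  "\<forall>t\<in>set (postL d). bt t 5 = 0"
  by (simp_all add: dat bt_def)

lemma tops_7: "\<forall>t\<in>set (preL d). t ! 7 = (\<not> d)" "c1 d ! 7 = (\<not> d)"
  "\<forall>t\<in>set (midL d). t ! 7 = (\<not> d)" "c2 d ! 7 = (\<not> d)"
  "\<forall>t\<in>set (butlast (postL d)). t ! 7 = (\<not> d)"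
  by (cases d; simp add: dat)+

lemma tops_hd_last: "hd (preL d) @ zeros k = (if d then zeros (Suc k) else bk (Suc k))"
  "last (postL d) @ zeros k = (if d then bk (Suc k) else zeros (Suc k))"
  by (simp_all add: dat zeros_Suc topB_def)

lemma path_struct:
  "(\<forall>x\<in>set (path d k). length x = 8*k) \<and> path d k \<noteq> [] \<and>
   hd (path d k) = (if d then zeros k else bk k) \<and> last (path d k) = (if d then bk k else zeros k) \<and>
   length (path d k) = 10 * (2^k - 1) + 1 \<and> (\<forall>x\<in>set (butlast (path d k)). x ! 7 = (\<not> d))"
proof (induction k arbitrary: d)
  case 0
  then show ?case by (simp add: zeros_def)
next
  case (Suc k)
  note T = Suc.IH[of True] and F = Suc.IH[of False]
  have l1: "\<forall>x\<in>set (path d (Suc k)). length x = 8 * Suc k"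
    using T F tops_len[of d] by auto
  have l2: "hd (path d (Suc k)) = (if d then zeros (Suc k) else bk (Suc k))"
    using tops_hd_last(1)[of d k] by (simp add: hd_map)
  have l3: "last (path d (Suc k)) = (if d then bk (Suc k) else zeros (Suc k))"
    using tops_hd_last(2)[of d k] by (simp add: last_map)
  have p2: "(2::nat) ^ k \<ge> 1" by simp
  have "length (path d (Suc k)) = 9 + 2 * (10 * (2^k - 1) + 1)"
    using T F by (simp add: tops_lenL)
  moreover have "\<forall>p::nat. p \<ge> 1 \<longrightarrow> 9 + 2 * (10 * (p - 1) + 1) = 10 * (2 * p - 1) + 1" by arith
  ultimately have l4: "length (path d (Suc k)) = 10 * (2 ^ Suc k - 1) + 1"
    using p2 by simp
  have bl: "butlast (path d (Suc k)) = map (\<lambda>t. t @ zeros k) (preL d) @ map ((@) (c1 d)) (path True k)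
     @ map (\<lambda>t. t @ bk k) (midL d) @ map ((@) (c2 d)) (path False k)
     @ map (\<lambda>t. t @ zeros k) (butlast (postL d))"
    by (simp add: butlast_append map_butlast)
  have bl8: "\<forall>t\<in>set (butlast (postL d)). length t = 8"
    using tops_len(5)[of d] by (auto dest: in_set_butlastD)
  have l5: "\<forall>x\<in>set (butlast (path d (Suc k))). x ! 7 = (\<not> d)"
    unfolding bl using tops_7[of d] tops_len[of d] bl8
    by (auto simp: nth_append)
  show ?case using l1 l2 l3 l4 l5 by simp
qed


lemma bt01: "bt t i = 0 \<or> bt t i = 1" by (simp add: bt_def)

lemma Ms_bounds:
  assumes "Suc k \<le> n"
  shows "s_par n (Suc k) \<ge> 0" "M_par n (Suc k) \<ge> s_par n (Suc k) + 8"
proof -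
  show "s_par n (Suc k) \<ge> 0" using assms by (simp add: s_par_def)
  have "(1::int) \<le> 2 ^ k" by simp
  then have "1 * (8 * int n + 16) \<le> 2 ^ k * (8 * int n + 16)"
    by (intro mult_right_mono) auto
  then have h: "8 * int n + 16 \<le> 2 ^ k * (8 * int n + 16)" by simp
  have e1: "M_par n (Suc k) = 2 ^ k * (8 * int n + 16) - 16" by (simp add: M_par_def)
  have e2: "s_par n (Suc k) = 8 * int n - 8 * int k - 8" by (simp add: s_par_def)
  show "M_par n (Suc k) \<ge> s_par n (Suc k) + 8" unfolding e1 e2 using h by linarith
qed

lemma peak_Q1:
  assumes "k \<le> n" and pk: "local_peak (8*k) (Fr n k 1 0) (bk k)"
  shows "local_peak (8*k) (Fr n k 1 1) (bk k)"
proof (cases k)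
  case 0 then show ?thesis by (simp add: local_peak0)
next
  case (Suc j)
  have s0: "s_par n (Suc j) \<ge> 0" using assms Suc by (simp add: s_par_def)
  have b7: "bt (bk k) 7 = 1" using Suc by (simp add: bt_def topB_def)
  show ?thesis unfolding local_peak_def
  proof (intro conjI allI impI)
    show "length (bk k) = 8 * k" by simp
    fix y assume "length y = 8 * k" "adjacent (bk k) y"
    then have "Fr n k 1 0 y \<le> Fr n k 1 0 (bk k)" using pk by (simp add: local_peak_def)
    moreover have "s_par n (Suc j) * bt y 7 \<le> s_par n (Suc j) * 1"
      using s0 bt01[of y 7] by auto
    ultimately show "Fr n k 1 1 y \<le> Fr n k 1 1 (bk k)"
      using Suc b7 by (simp add: Fr_Q[of n j 1 1])
  qed
qed

lemma step_lemma:
  assumes kn: "Suc k \<le> n" and v: "valid d P Q"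
    and IHf: "chain (Fr n k 1 0) (8*k) (path True k)" and Pb: "local_peak (8*k) (Fr n k 1 0) (bk k)"
    and IHb: "\<And>Q. Q = 0 \<or> Q = 1 \<Longrightarrow> chain (Fr n k 0 Q) (8*k) (path False k)
                  \<and> local_peak (8*k) (Fr n k 0 Q) (zeros k)"
  shows "chain (Fr n (Suc k) P Q) (8 * Suc k) (path d (Suc k))
    \<and> local_peak (8 * Suc k) (Fr n (Suc k) P Q) (last (path d (Suc k)))"
proof -
  define M where "M = M_par n (Suc k)"
  define s where "s = s_par n (Suc k)"
  have s0: "s \<ge> 0" and Ms: "M \<ge> s + 8" using Ms_bounds[OF kn] by (simp_all add: M_def s_def)
  define dz where "dz = (if k = 0 then None else Some (0::int, 0::int))"
  define db where "db = (if k = 0 then None else Some (1::int, 1::int))"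
  have dz: "dz = None \<or> dz = Some (0,0)" by (simp add: dz_def)
  have db: "db = None \<or> db = Some (1,1)" by (simp add: db_def)
  note chz = chk_z[OF s0 Ms v dz] and chb = chk_b[OF s0 Ms v db]
  note chs0 = chk_s[OF s0 Ms v, of 0] and chs1 = chk_s[OF s0 Ms v, of 1]
  have Ez: "(\<lambda>v. TEk n k v P Q (zeros k)) = TEx M s P Q dz"
    by (rule ext) (simp add: TEk_def M_def s_def dz_def bt_def zeros_def)
  have Eb: "(\<lambda>v. TEk n k v P Q (bk k)) = TEx M s P Q db"
  proof (cases k)
    case 0 then show ?thesis by (simp add: TEk_def M_def s_def db_def)
  next
    case (Suc j) then show ?thesis
      by (intro ext) (simp add: TEk_def M_def s_def db_def bt_def topB_def nth_append)
  qed
  have Ex: "(\<lambda>v. TEk n k v P Q x) = TEx M s P Q (Some (bt x 0, bt x 7))" if "k \<noteq> 0" for x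
    using that by (simp add: TEk_def M_def s_def)
  have ST: "\<forall>x\<in>set (path True k). length x = 8*k" "path True k \<noteq> []"
    "hd (path True k) = zeros k" "last (path True k) = bk k"
    "\<forall>x\<in>set (butlast (path True k)). \<not> x ! 7"
    using path_struct[of True k] by auto
  have SF: "\<forall>x\<in>set (path False k). length x = 8*k" "path False k \<noteq> []"
    "hd (path False k) = bk k" "last (path False k) = zeros k"
    "\<forall>x\<in>set (butlast (path False k)). x ! 7"
    using path_struct[of False k] by auto
  have Pz: "local_peak (8*k) (Fr n k 0 (bt t 6)) (zeros k)" for t using IHb bt01 by blast
  have Pz0: "local_peak (8*k) (Fr n k 0 0) (zeros k)" and Pz1: "local_peak (8*k) (Fr n k 0 1) (zeros k)"
    using IHb by auto
  have Pbq: "local_peak (8*k) (Fr n k 1 (bt t 6)) (bk k)" for t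
    using bt01[of t 6] Pb peak_Q1[OF _ Pb] kn by auto
  note TL = tops_len[of d] and TB = tops_bt[of d]
  let ?big = "Fr n (Suc k) P Q" and ?N = "8 * Suc k"
  have C1: "chain ?big ?N (map (\<lambda>t. t @ zeros k) (preL d @ [c1 d]))"
  proof (rule lift_top)
    show "\<forall>t\<in>set (preL d @ [c1 d]). length t = 8" using TL by auto
    show "tchain (\<lambda>v. TEk n k v P Q (zeros k)) (preL d @ [c1 d])" using Ez chz by simp
    show "\<forall>t\<in>set (butlast (preL d @ [c1 d])). local_peak (8 * k) (Fr n k (bt t 5) (bt t 6)) (zeros k)"
      using TB Pz Pz0 Pz1 by simp
  qed simp
  have C2: "chain ?big ?N (map ((@) (c1 d)) (path True k))"
  proof (rule lift_lower)
    show "length (c1 d) = 8" using TL by simp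
    show "chain (Fr n k (bt (c1 d) 5) (bt (c1 d) 6)) (8 * k) (path True k)" using IHf TB by simp
    show "\<forall>x\<in>set (path True k). length x = 8 * k" using ST by simp
    show "\<forall>x\<in>set (butlast (path True k)). peakc (\<lambda>v. TEk n k v P Q x) (c1 d)"
    proof
      fix x assume x: "x \<in> set (butlast (path True k))"
      then have k0: "k \<noteq> 0" by (cases k) auto
      have "bt x 7 = 0" using x ST by (simp add: bt_def)
      then show "peakc (\<lambda>v. TEk n k v P Q x) (c1 d)"
        unfolding Ex[OF k0] using bt01[of x 0] chs0 chs1 by auto
    qed
  qed
  have C3: "chain ?big ?N (map (\<lambda>t. t @ bk k) (c1 d # midL d @ [c2 d]))"
  proof (rule lift_top)
    show "\<forall>t\<in>set (c1 d # midL d @ [c2 d]). length t = 8" using TL by auto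
    show "tchain (\<lambda>v. TEk n k v P Q (bk k)) (c1 d # midL d @ [c2 d])" using Eb chb by simp
    show "\<forall>t\<in>set (butlast (c1 d # midL d @ [c2 d])). local_peak (8 * k) (Fr n k (bt t 5) (bt t 6)) (bk k)"
      using TB Pbq Pb by (simp add: butlast_append)
  qed simp
  have C4: "chain ?big ?N (map ((@) (c2 d)) (path False k))"
  proof (rule lift_lower)
    show "length (c2 d) = 8" using TL by simp
    show "chain (Fr n k (bt (c2 d) 5) (bt (c2 d) 6)) (8 * k) (path False k)" using IHb TB by simp
    show "\<forall>x\<in>set (path False k). length x = 8 * k" using SF by simp
    show "\<forall>x\<in>set (butlast (path False k)). peakc (\<lambda>v. TEk n k v P Q x) (c2 d)"
    proof
      fix x assume x: "x \<in> set (butlast (path False k))"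
      then have k0: "k \<noteq> 0" by (cases k) auto
      have "bt x 7 = 1" using x SF by (simp add: bt_def)
      then show "peakc (\<lambda>v. TEk n k v P Q x) (c2 d)"
        unfolding Ex[OF k0] using bt01[of x 0] chs0 chs1 by auto
    qed
  qed
  have C5: "chain ?big ?N (map (\<lambda>t. t @ zeros k) (c2 d # postL d))"
  proof (rule lift_top)
    show "\<forall>t\<in>set (c2 d # postL d). length t = 8" using TL by auto
    show "tchain (\<lambda>v. TEk n k v P Q (zeros k)) (c2 d # postL d)" using Ez chz by simp
    have "\<forall>t\<in>set (butlast (postL d)). bt t 5 = 0" using TB by (auto dest: in_set_butlastD)
    then show "\<forall>t\<in>set (butlast (c2 d # postL d)). local_peak (8 * k) (Fr n k (bt t 5) (bt t 6)) (zeros k)"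
      using TB Pz Pz0 Pz1 by simp
  qed simp
  have lp: "last (path d (Suc k)) = last (postL d) @ zeros k" by (simp add: last_map)
  have PK: "local_peak ?N ?big (last (path d (Suc k)))"
    unfolding lp
  proof (rule peak_top)
    show "length (last (postL d)) = 8" using TL by simp
    show "peakc (\<lambda>v. TEk n k v P Q (zeros k)) (last (postL d))" using Ez chz by simp
    have "bt (last (postL d)) 5 = 0" using TB by simp
    then show "local_peak (8 * k) (Fr n k (bt (last (postL d)) 5) (bt (last (postL d)) 6)) (zeros k)"
      using Pz by simp
  qed simp
  let ?P1 = "map (\<lambda>t. t @ zeros k) (preL d)" and ?P2 = "map ((@) (c1 d)) (path True k)"
  and ?P3 = "map (\<lambda>t. t @ bk k) (midL d)" and ?P4 = "map ((@) (c2 d)) (path False k)"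
  and ?P5 = "map (\<lambda>t. t @ zeros k) (postL d)"
  have A: "chain ?big ?N (?P4 @ ?P5)"
    using glue1[OF C4] SF C5 by (simp add: last_map)
  have hP4: "?P4 @ ?P5 = (c2 d @ bk k) # tl (?P4 @ ?P5)"
    using SF by (cases "path False k") auto
  have B: "chain ?big ?N ((c1 d @ bk k) # ?P3 @ ?P4 @ ?P5)"
  proof -
    have "chain ?big ?N (((c1 d @ bk k) # ?P3) @ [c2 d @ bk k])" using C3 by simp
    moreover have "chain ?big ?N ((c2 d @ bk k) # tl (?P4 @ ?P5))" using A hP4 by simp
    ultimately have "chain ?big ?N (((c1 d @ bk k) # ?P3) @ (c2 d @ bk k) # tl (?P4 @ ?P5))"
      by (rule glue2)
    then show ?thesis using hP4 by (metis append_Cons append_assoc)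
  qed
  have C: "chain ?big ?N (?P2 @ ?P3 @ ?P4 @ ?P5)"
    using glue1[OF C2] ST B by (simp add: last_map)
  have hP2: "?P2 @ ?P3 @ ?P4 @ ?P5 = (c1 d @ zeros k) # tl (?P2 @ ?P3 @ ?P4 @ ?P5)"
    using ST by (cases "path True k") auto
  have D: "chain ?big ?N (?P1 @ ?P2 @ ?P3 @ ?P4 @ ?P5)"
  proof -
    have "chain ?big ?N (?P1 @ [c1 d @ zeros k])" using C1 by simp
    moreover have "chain ?big ?N ((c1 d @ zeros k) # tl (?P2 @ ?P3 @ ?P4 @ ?P5))" using C hP2 by simp
    ultimately have "chain ?big ?N (?P1 @ (c1 d @ zeros k) # tl (?P2 @ ?P3 @ ?P4 @ ?P5))"
      by (rule glue2)
    then show ?thesis using hP2 by metis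
  qed
  then show ?thesis using PK by simp
qed

lemma dyn:
  "k \<le> n \<Longrightarrow> chain (Fr n k 1 0) (8*k) (path True k) \<and> local_peak (8*k) (Fr n k 1 0) (bk k) \<and>
     (\<forall>Q. Q = 0 \<or> Q = 1 \<longrightarrow> chain (Fr n k 0 Q) (8*k) (path False k) \<and> local_peak (8*k) (Fr n k 0 Q) (zeros k))"
proof (induction k)
  case 0 then show ?case by (simp add: local_peak0 zeros_def)
next
  case (Suc k)
  then have IH: "chain (Fr n k 1 0) (8*k) (path True k)" "local_peak (8*k) (Fr n k 1 0) (bk k)"
    "\<And>Q. Q = 0 \<or> Q = 1 \<Longrightarrow> chain (Fr n k 0 Q) (8*k) (path False k) \<and> local_peak (8*k) (Fr n k 0 Q) (zeros k)"
    by auto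
  note st = step_lemma[OF Suc.prems _ IH]
  have "chain (Fr n (Suc k) 1 0) (8 * Suc k) (path True (Suc k)) \<and>
        local_peak (8 * Suc k) (Fr n (Suc k) 1 0) (bk (Suc k))"
    using st[of True 1 0] path_struct[of True "Suc k"] by (simp add: valid_def)
  moreover have "chain (Fr n (Suc k) 0 Q) (8 * Suc k) (path False (Suc k)) \<and>
        local_peak (8 * Suc k) (Fr n (Suc k) 0 Q) (zeros (Suc k))" if "Q = 0 \<or> Q = 1" for Q
    using st[of False 0 Q] path_struct[of False "Suc k"] that by (simp add: valid_def)
  ultimately show ?case by blast
qed


theorem theorem4p1:
  fixes n m :: nat
  assumes "n \<ge> 1" and "1 \<le> m" and "m \<le> n"
  defines "a \<equiv> replicate (8 * m) False"
      and "b \<equiv> [True, True, True, True, True, False, False, True] @ replicate (8 * (m - 1)) False"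
  shows "(\<exists>!p. is_ascent (8 * m) (fitness n m 1) p \<and> hd p = a)
       \<and> (\<forall>p. is_ascent (8 * m) (fitness n m 1) p \<and> hd p = a \<longrightarrow>
              last p = b \<and> length p - 1 = 10 * (2 ^ m - 1))
       \<and> (\<exists>!p. is_ascent (8 * m) (fitness n m 0) p \<and> hd p = b)
       \<and> (\<forall>p. is_ascent (8 * m) (fitness n m 0) p \<and> hd p = b \<longrightarrow>
              last p = a \<and> length p - 1 = 10 * (2 ^ m - 1))"
proof -
  have az: "a = zeros m" by (simp add: a_def zeros_def)
  have bb: "b = bk m"
  proof -
    obtain j where j: "m = Suc j" using assms(2) by (cases m) auto
    show ?thesis by (simp add: b_def j topB_def zeros_def)
  qed
  have F1: "is_ascent (8*m) (fitness n m 1) p = is_ascent (8*m) (Fr n m 1 0) p" for p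
    by (rule is_ascent_cong, rule fitness_Fr, assumption, rule assms(2))
  have F0: "is_ascent (8*m) (fitness n m 0) p = is_ascent (8*m) (Fr n m 0 0) p" for p
    by (rule is_ascent_cong, rule fitness_Fr, assumption, rule assms(2))
  have D: "chain (Fr n m 1 0) (8*m) (path True m)" "local_peak (8*m) (Fr n m 1 0) (bk m)"
    "chain (Fr n m 0 0) (8*m) (path False m)" "local_peak (8*m) (Fr n m 0 0) (zeros m)"
    using dyn[OF assms(3)] by auto
  have ST: "\<forall>x\<in>set (path True m). length x = 8*m" "path True m \<noteq> []"
    "hd (path True m) = zeros m" "last (path True m) = bk m"
    "length (path True m) = 10 * (2^m - 1) + 1"
    using path_struct[of True m] by auto
  have SF: "\<forall>x\<in>set (path False m). length x = 8*m" "path False m \<noteq> []"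
    "hd (path False m) = bk m" "last (path False m) = zeros m"
    "length (path False m) = 10 * (2^m - 1) + 1"
    using path_struct[of False m] by auto
  have E1: "is_ascent (8*m) (Fr n m 1 0) (path True m)"
    using ascent_exists[OF D(1) ST(2) ST(1)] D(2) ST(4) by simp
  have U1: "p = path True m" if "is_ascent (8*m) (Fr n m 1 0) p" "hd p = a" for p
    using ascent_unique[OF D(1) ST(2) ST(1)] D(2) ST(3,4) that az by simp
  have E0: "is_ascent (8*m) (Fr n m 0 0) (path False m)"
    using ascent_exists[OF D(3) SF(2) SF(1)] D(4) SF(4) by simp
  have U0: "p = path False m" if "is_ascent (8*m) (Fr n m 0 0) p" "hd p = b" for p
    using ascent_unique[OF D(3) SF(2) SF(1)] D(4) SF(3,4) that bb by simp
  show ?thesis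
    unfolding F1 F0
  proof (intro conjI allI impI)
    show "\<exists>!p. is_ascent (8 * m) (Fr n m 1 0) p \<and> hd p = a"
      using E1 U1 ST(3) az by blast
    show "\<exists>!p. is_ascent (8 * m) (Fr n m 0 0) p \<and> hd p = b"
      using E0 U0 SF(3) bb by blast
  next
    fix p assume "is_ascent (8 * m) (Fr n m 1 0) p \<and> hd p = a"
    then have "p = path True m" using U1 by blast
    then show "last p = b" "length p - 1 = 10 * (2 ^ m - 1)" using ST bb by auto
  next
    fix p assume "is_ascent (8 * m) (Fr n m 0 0) p \<and> hd p = b"
    then have "p = path False m" using U0 by blast
    then show "last p = a" "length p - 1 = 10 * (2 ^ m - 1)" using SF az by auto
  qed
qed

end
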